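(* There is a non-atomic left-c.e. semi-measure $\rho$ such that every $X\in2^\omega$ belongs to $\mathsf{MLR}_\rho$.
   Context: $2^{<\omega}$ is the set of finite binary strings, $\varepsilon$ the empty string, $X{\upharpoonright}n$ the first $n$ bits of $X$, $[\![\sigma]\!]=\{X\in2^\omega:\sigma\preceq X\}$, $[\![S]\!]=\bigcup_{\sigma\in S}[\![\sigma]\!]$. A semi-measure is $\rho:2^{<\omega}\to[0,1]$ with $\rho(\varepsilon)=1$ and $\rho(\sigma)\ge\rho(\sigma0)+\rho(\sigma1)$; it is left-c.e. if its values are uniformly approximable from below by a computable, non-decreasing sequence of rationals. Non-atomic means that no $X\in2^\omega$ is an atom, i.e., $\inf_n\rho(X{\upharpoonright}n)=0$ for every $X$. For $E\subseteq2^{<\omega}$, $\rho(E)=\sum_{\sigma\in E}\rho(\sigma)$; $X\in\mathsf{MLR}_\rho$ iff $X\notin\bigcap_i[\![U_i]\!]$ for every uniformly c.e. sequence $(U_i)$ of subsets of $2^{<\omega}$ with $\rho(U_i)\le2^{-i}$ for all $i$. *)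

theory Defs
  imports "HOL-Analysis.Analysis"
begin

datatype recf = Zero | Succ | Proj nat | Comp recf "recf list" | Prim recf recf | Mini recf

inductive eval :: "recf \<Rightarrow> nat list \<Rightarrow> nat \<Rightarrow> bool" where
  eval_zero: "eval Zero xs 0"
| eval_succ: "eval Succ (x # xs) (Suc x)"
| eval_proj: "i < length xs \<Longrightarrow> eval (Proj i) xs (xs ! i)"
| eval_comp: "list_all2 (\<lambda>g y. eval g xs y) gs ys \<Longrightarrow> eval f ys z \<Longrightarrow> eval (Comp f gs) xs z"
| eval_prim0: "eval f xs z \<Longrightarrow> eval (Prim f g) (0 # xs) z"
| eval_primS: "eval (Prim f g) (n # xs) y \<Longrightarrow> eval g (y # n # xs) z
                 \<Longrightarrow> eval (Prim f g) (Suc n # xs) z"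
| eval_mini: "eval f (n # xs) 0 \<Longrightarrow> (\<forall>m<n. \<exists>k. eval f (m # xs) (Suc k))
                 \<Longrightarrow> eval (Mini f) xs n"

text \<open>Finite binary strings are bool lists; infinite sequences are nat => bool.
  Strings are coded by natural numbers via bijective base-2 numeration.\<close>

fun str_code :: "bool list \<Rightarrow> nat" where
  "str_code [] = 0"
| "str_code (b # bs) = 2 * str_code bs + (if b then 2 else 1)"

definition prefix_of :: "(nat \<Rightarrow> bool) \<Rightarrow> nat \<Rightarrow> bool list" where
  "prefix_of X n = map X [0..<n]"

definition cyl :: "bool list set \<Rightarrow> (nat \<Rightarrow> bool) set" where
  "cyl S = {X. \<exists>\<sigma>\<in>S. prefix_of X (length \<sigma>) = \<sigma>}"

definition semimeasure :: "(bool list \<Rightarrow> real) \<Rightarrow> bool" where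
  "semimeasure \<rho> \<longleftrightarrow> (\<forall>\<sigma>. 0 \<le> \<rho> \<sigma> \<and> \<rho> \<sigma> \<le> 1) \<and> \<rho> [] = 1
     \<and> (\<forall>\<sigma>. \<rho> \<sigma> \<ge> \<rho> (\<sigma> @ [False]) + \<rho> (\<sigma> @ [True]))"

definition left_ce :: "(bool list \<Rightarrow> real) \<Rightarrow> bool" where
  "left_ce \<rho> \<longleftrightarrow> (\<exists>q :: bool list \<Rightarrow> nat \<Rightarrow> real.
     (\<exists>ra rb rc. \<forall>\<sigma> s. \<exists>a b c. eval ra [str_code \<sigma>, s] a \<and> eval rb [str_code \<sigma>, s] b
          \<and> eval rc [str_code \<sigma>, s] c \<and> q \<sigma> s = (real a - real b) / (real c + 1))
     \<and> (\<forall>\<sigma> s. q \<sigma> s \<le> q \<sigma> (Suc s))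
     \<and> (\<forall>\<sigma>. q \<sigma> \<longlonglongrightarrow> \<rho> \<sigma>))"

definition non_atomic :: "(bool list \<Rightarrow> real) \<Rightarrow> bool" where
  "non_atomic \<rho> \<longleftrightarrow> (\<forall>X. (INF n. \<rho> (prefix_of X n)) = 0)"

definition rho_set :: "(bool list \<Rightarrow> real) \<Rightarrow> bool list set \<Rightarrow> ennreal" where
  "rho_set \<rho> E = (\<Sum>\<^sub>\<infinity>\<sigma>\<in>E. ennreal (\<rho> \<sigma>))"

definition unif_ce :: "(nat \<Rightarrow> bool list set) \<Rightarrow> bool" where
  "unif_ce U \<longleftrightarrow> (\<exists>r. \<forall>i \<sigma>. \<sigma> \<in> U i \<longleftrightarrow> (\<exists>v. eval r [i, str_code \<sigma>] v))"

definition MLR :: "(bool list \<Rightarrow> real) \<Rightarrow> (nat \<Rightarrow> bool) set" where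
  "MLR \<rho> = {X. \<forall>U. unif_ce U \<and> (\<forall>i. rho_set \<rho> (U i) \<le> ennreal ((1/2) ^ i))
                 \<longrightarrow> X \<notin> (\<Inter>i. cyl (U i))}"

end

theory Submission
  imports Defs "HOL-Library.Nat_Bijection"
begin


definition tot :: "nat \<Rightarrow> (nat list \<Rightarrow> nat) \<Rightarrow> bool" where
  "tot n f \<longleftrightarrow> (\<exists>r. \<forall>xs. length xs = n \<longrightarrow> eval r xs (f xs))"

lemma tot_cong: "tot n f \<Longrightarrow> (\<And>xs. length xs = n \<Longrightarrow> f xs = g xs) \<Longrightarrow> tot n g"
  unfolding tot_def by metis

lemma tot_proj: "i < n \<Longrightarrow> tot n (\<lambda>xs. xs ! i)"
  unfolding tot_def by (auto intro!: exI[of _ "Proj i"] eval_proj)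

lemma tot_zero: "tot n (\<lambda>xs. 0)"
  unfolding tot_def by (auto intro!: exI[of _ Zero] eval_zero)

lemma tot_comp:
  assumes h: "tot m h" and g: "\<And>j. j < m \<Longrightarrow> tot n (g j)"
  shows "tot n (\<lambda>xs. h (map (\<lambda>j. g j xs) [0..<m]))"
proof -
  obtain rh where rh: "\<And>xs. length xs = m \<Longrightarrow> eval rh xs (h xs)" using h unfolding tot_def by blast
  have "\<forall>j. \<exists>r. j < m \<longrightarrow> (\<forall>xs. length xs = n \<longrightarrow> eval r xs (g j xs))" using g unfolding tot_def by blast
  then obtain rg where rg: "\<And>j xs. j < m \<Longrightarrow> length xs = n \<Longrightarrow> eval (rg j) xs (g j xs)" by metis
  show ?thesis unfolding tot_def
  proof (intro exI allI impI)
    fix xs :: "nat list" assume len: "length xs = n"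
    show "eval (Comp rh (map rg [0..<m])) xs (h (map (\<lambda>j. g j xs) [0..<m]))"
    proof (rule eval_comp)
      show "list_all2 (\<lambda>g y. eval g xs y) (map rg [0..<m]) (map (\<lambda>j. g j xs) [0..<m])"
        using rg len by (auto simp: list_all2_conv_all_nth)
      show "eval rh (map (\<lambda>j. g j xs) [0..<m]) (h (map (\<lambda>j. g j xs) [0..<m]))"
        by (rule rh) simp
    qed
  qed
qed

lemma tot_comp1: "tot 1 h \<Longrightarrow> tot n a \<Longrightarrow> tot n (\<lambda>xs. h [a xs])"
  using tot_comp[of 1 h n "\<lambda>j. a"] by simp

lemma tot_comp2: "tot 2 h \<Longrightarrow> tot n a \<Longrightarrow> tot n b \<Longrightarrow> tot n (\<lambda>xs. h [a xs, b xs])"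
  using tot_comp[of 2 h n "\<lambda>j. if j = 0 then a else b"] by (simp add: upt_rec)

lemma tot_comp3: "tot 3 h \<Longrightarrow> tot n a \<Longrightarrow> tot n b \<Longrightarrow> tot n c \<Longrightarrow> tot n (\<lambda>xs. h [a xs, b xs, c xs])"
  using tot_comp[of 3 h n "\<lambda>j. if j = 0 then a else if j = 1 then b else c"] by (simp add: upt_rec)

primrec PRL :: "(nat list \<Rightarrow> nat) \<Rightarrow> (nat list \<Rightarrow> nat) \<Rightarrow> nat \<Rightarrow> nat list \<Rightarrow> nat" where
  "PRL f g 0 ys = f ys"
| "PRL f g (Suc k) ys = g (PRL f g k ys # k # ys)"

lemma tot_prim:
  assumes f: "tot n f" and g: "tot (Suc (Suc n)) g"
  shows "tot (Suc n) (\<lambda>xs. PRL f g (hd xs) (tl xs))"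
proof -
  obtain rf where rf: "\<And>xs. length xs = n \<Longrightarrow> eval rf xs (f xs)" using f unfolding tot_def by blast
  obtain rg where rg: "\<And>xs. length xs = Suc (Suc n) \<Longrightarrow> eval rg xs (g xs)" using g unfolding tot_def by blast
  have *: "eval (Prim rf rg) (k # ys) (PRL f g k ys)" if "length ys = n" for k ys
    using that
  proof (induction k)
    case 0 then show ?case by (auto intro: eval_prim0 rf)
  next
    case (Suc k) then show ?case by (auto intro!: eval_primS rg)
  qed
  show ?thesis unfolding tot_def
    by (rule exI[of _ "Prim rf rg"]) (auto simp: length_Suc_conv intro: *)
qed

lemma tot_succ: "tot 1 (\<lambda>xs. Suc (hd xs))"
  unfolding tot_def by (auto simp: length_Suc_conv intro!: exI[of _ Succ] eval_succ)



definition op1 :: "(nat \<Rightarrow> nat) \<Rightarrow> bool" where "op1 F \<longleftrightarrow> tot 1 (\<lambda>xs. F (hd xs))"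
definition op2 :: "(nat \<Rightarrow> nat \<Rightarrow> nat) \<Rightarrow> bool" where "op2 H \<longleftrightarrow> tot 2 (\<lambda>xs. H (xs!0) (xs!1))"

lemma tot_op1: "op1 F \<Longrightarrow> tot n a \<Longrightarrow> tot n (\<lambda>xs. F (a xs))"
  unfolding op1_def using tot_comp1[of "\<lambda>xs. F (hd xs)" n a] by simp

lemma tot_op2: "op2 H \<Longrightarrow> tot n a \<Longrightarrow> tot n b \<Longrightarrow> tot n (\<lambda>xs. H (a xs) (b xs))"
  unfolding op2_def using tot_comp2[of "\<lambda>xs. H (xs!0) (xs!1)" n a b] by simp

lemma op1_succ: "op1 Suc" unfolding op1_def by (rule tot_succ)

lemma tot_suc: "tot n a \<Longrightarrow> tot n (\<lambda>xs. Suc (a xs))"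
  by (rule tot_op1[OF op1_succ])

lemma tot_const: "tot n (\<lambda>xs. c)"
  by (induction c) (auto intro: tot_zero tot_suc)

lemma tot_hd: "tot (Suc n) hd"
  using tot_proj[of 0 "Suc n"] by (rule tot_cong) (auto simp: length_Suc_conv)

lemma len2: "length xs = 2 \<longleftrightarrow> (\<exists>a b. xs = [a, b])"
  by (auto simp: numeral_2_eq_2 length_Suc_conv)
lemma len3: "length xs = 3 \<longleftrightarrow> (\<exists>a b c. xs = [a, b, c])"
  by (auto simp: numeral_3_eq_3 length_Suc_conv)
lemma len1: "length xs = 1 \<longleftrightarrow> (\<exists>a. xs = [a])"
  by (auto simp: length_Suc_conv)

lemma op2_add: "op2 (+)"
proof -
  have A: "tot 2 (\<lambda>xs. PRL (\<lambda>ys. ys!0) (\<lambda>zs. Suc (zs!0)) (hd xs) (tl xs))"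
    using tot_prim[of 1 "\<lambda>ys. ys!0" "\<lambda>zs. Suc (zs!0)"]
    by (simp add: tot_proj tot_suc numeral_2_eq_2 numeral_3_eq_3)
  have E: "PRL (\<lambda>ys. ys!0) (\<lambda>zs. Suc (zs!0)) k [y] = k + y" for k y by (induction k) auto
  show ?thesis unfolding op2_def using E by (intro tot_cong[OF A]) (auto simp: length_Suc_conv numeral_2_eq_2)
qed

lemma op1_pred: "op1 (\<lambda>x. x - 1)"
proof -
  have A: "tot 1 (\<lambda>xs. PRL (\<lambda>ys. 0) (\<lambda>zs. zs!1) (hd xs) (tl xs))"
    using tot_prim[of 0 "\<lambda>ys. 0" "\<lambda>zs. zs!1"] by (simp add: tot_proj tot_zero)
  have E: "PRL (\<lambda>ys. 0) (\<lambda>zs. zs!1) k [] = k - 1" for k by (induction k) auto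
  show ?thesis unfolding op1_def using E by (intro tot_cong[OF A]) (auto simp: length_Suc_conv)
qed

lemma op2_sub: "op2 (-)"
proof -
  have A: "tot 2 (\<lambda>xs. PRL (\<lambda>ys. ys!0) (\<lambda>zs. zs!0 - 1) (hd xs) (tl xs))"
    using tot_prim[of 1 "\<lambda>ys. ys!0" "\<lambda>zs. zs!0 - 1"]
    using tot_op1[OF op1_pred tot_proj[of 0 3]] by (simp add: tot_proj numeral_2_eq_2 numeral_3_eq_3)
  have E: "PRL (\<lambda>ys. ys!0) (\<lambda>zs. zs!0 - 1) k [y] = y - k" for k y by (induction k) auto
  have "tot 2 (\<lambda>xs. xs!1 - xs!0)" using E by (intro tot_cong[OF A]) (auto simp: length_Suc_conv numeral_2_eq_2)
  from tot_comp2[OF this, of 2 "\<lambda>xs. xs!1" "\<lambda>xs. xs!0"] show ?thesis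
    unfolding op2_def by (simp add: tot_proj)
qed

lemma op2_mult: "op2 (*)"
proof -
  have A: "tot 2 (\<lambda>xs. PRL (\<lambda>ys. 0) (\<lambda>zs. zs!0 + zs!2) (hd xs) (tl xs))"
    using tot_prim[of 1 "\<lambda>ys. 0" "\<lambda>zs. zs!0 + zs!2"]
    by (simp add: tot_zero tot_proj tot_op2[OF op2_add] numeral_2_eq_2 numeral_3_eq_3)
  have E: "PRL (\<lambda>ys. 0) (\<lambda>zs. zs!0 + zs!2) k [y] = k * y" for k y by (induction k) auto
  show ?thesis unfolding op2_def using E by (intro tot_cong[OF A]) (auto simp: length_Suc_conv numeral_2_eq_2)
qed

lemma op1_triangle: "op1 triangle"
proof -
  have A: "tot 1 (\<lambda>xs. PRL (\<lambda>ys. 0) (\<lambda>zs. zs!0 + Suc (zs!1)) (hd xs) (tl xs))"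
    using tot_prim[of 0 "\<lambda>ys. 0" "\<lambda>zs. zs!0 + Suc (zs!1)"]
    by (simp add: tot_zero tot_proj tot_suc tot_op2[OF op2_add] numeral_2_eq_2)
  have E: "PRL (\<lambda>ys. 0) (\<lambda>zs. zs!0 + Suc (zs!1)) k [] = triangle k" for k by (induction k) auto
  show ?thesis unfolding op1_def using E by (intro tot_cong[OF A]) (auto simp: length_Suc_conv)
qed

lemma op1_pow2: "op1 (\<lambda>k. 2 ^ k)"
proof -
  have A: "tot 1 (\<lambda>xs. PRL (\<lambda>ys. 1) (\<lambda>zs. zs!0 + zs!0) (hd xs) (tl xs))"
    using tot_prim[of 0 "\<lambda>ys. 1" "\<lambda>zs. zs!0 + zs!0"]
    by (simp add: tot_const tot_proj tot_op2[OF op2_add])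
  have E: "PRL (\<lambda>ys. 1) (\<lambda>zs. zs!0 + zs!0) k [] = 2 ^ k" for k by (induction k) auto
  show ?thesis unfolding op1_def using E by (intro tot_cong[OF A]) (auto simp: length_Suc_conv)
qed

text \<open>diagonal index for decoding pairs\<close>

primrec sdiag :: "nat \<Rightarrow> nat" where
  "sdiag 0 = 0"
| "sdiag (Suc k) = sdiag k + (1 - (triangle (sdiag k + 1) - (k + 1)))"

lemma sdiag_inv: "triangle (sdiag n) \<le> n \<and> n < triangle (sdiag n) + sdiag n + 1"
proof (induction n)
  case 0 then show ?case by simp
next
  case (Suc n)
  show ?case
  proof (cases "triangle (sdiag n + 1) \<le> n + 1")
    case True
    then have "sdiag (Suc n) = sdiag n + 1" by simp
    then show ?thesis using True Suc by simp
  next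
    case False
    then have "sdiag (Suc n) = sdiag n" by simp
    then show ?thesis using False Suc by simp
  qed
qed

lemma op1_sdiag: "op1 sdiag"
proof -
  have A: "tot 1 (\<lambda>xs. PRL (\<lambda>ys. 0) (\<lambda>zs. zs!0 + (1 - (triangle (zs!0 + 1) - (zs!1 + 1)))) (hd xs) (tl xs))"
    using tot_prim[of 0 "\<lambda>ys. 0" "\<lambda>zs. zs!0 + (1 - (triangle (zs!0 + 1) - (zs!1 + 1)))"]
    by (simp add: tot_zero tot_proj tot_const tot_op2[OF op2_add] tot_op2[OF op2_sub] tot_op1[OF op1_triangle])
  have E: "PRL (\<lambda>ys. 0) (\<lambda>zs. zs!0 + (1 - (triangle (zs!0 + 1) - (zs!1 + 1)))) k [] = sdiag k" for k
    by (induction k) auto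
  show ?thesis unfolding op1_def using E by (intro tot_cong[OF A]) (auto simp: length_Suc_conv)
qed

definition pair :: "nat \<Rightarrow> nat \<Rightarrow> nat" where "pair a b = prod_encode (a, b)"
definition pf :: "nat \<Rightarrow> nat" where "pf n = fst (prod_decode n)"
definition ps :: "nat \<Rightarrow> nat" where "ps n = snd (prod_decode n)"

lemma pf_pair[simp]: "pf (pair a b) = a" and ps_pair[simp]: "ps (pair a b) = b"
  by (auto simp: pf_def ps_def pair_def)
lemma pair_pf_ps[simp]: "pair (pf n) (ps n) = n"
  by (simp add: pf_def ps_def pair_def)
lemma pair_eq_iff[simp]: "pair a b = pair c d \<longleftrightarrow> a = c \<and> b = d"
  by (simp add: pair_def)

lemma pf_formula: "pf n = n - triangle (sdiag n)" and ps_formula: "ps n = sdiag n - (n - triangle (sdiag n))"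
proof -
  let ?a = "n - triangle (sdiag n)" and ?b = "sdiag n - (n - triangle (sdiag n))"
  have "pair ?a ?b = n" using sdiag_inv[of n] by (simp add: pair_def prod_encode_def)
  then have "pf n = ?a \<and> ps n = ?b" by (metis pf_pair ps_pair)
  then show "pf n = ?a" "ps n = ?b" by auto
qed

lemma op2_pair: "op2 pair"
proof -
  have A: "tot 2 (\<lambda>xs. triangle (xs!0 + xs!1) + xs!0)"
    by (simp add: tot_proj tot_op2[OF op2_add] tot_op1[OF op1_triangle])
  then show ?thesis unfolding op2_def by (rule tot_cong) (auto simp: pair_def prod_encode_def len2)
qed

lemma op1_pf: "op1 pf"
proof -
  have A: "tot 1 (\<lambda>xs. hd xs - triangle (sdiag (hd xs)))"
    by (simp add: tot_hd tot_op2[OF op2_sub] tot_op1[OF op1_triangle] tot_op1[OF op1_sdiag])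
  then show ?thesis unfolding op1_def by (rule tot_cong) (auto simp: pf_formula len1)
qed

lemma op1_ps: "op1 ps"
proof -
  have A: "tot 1 (\<lambda>xs. sdiag (hd xs) - (hd xs - triangle (sdiag (hd xs))))"
    by (simp add: tot_hd tot_op2[OF op2_sub] tot_op1[OF op1_triangle] tot_op1[OF op1_sdiag])
  then show ?thesis unfolding op1_def by (rule tot_cong) (auto simp: ps_formula len1)
qed

abbreviation T :: "(nat \<Rightarrow> nat) \<Rightarrow> bool" where "T \<equiv> op1"

lemma T_id: "T (\<lambda>x. x)" unfolding op1_def using tot_hd[of 0] by simp
lemma T_const: "T (\<lambda>x. c)" unfolding op1_def by (rule tot_const)
lemma T_comp: "op1 F \<Longrightarrow> T a \<Longrightarrow> T (\<lambda>x. F (a x))"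
  unfolding op1_def by (rule tot_op1) (auto simp: op1_def)
lemma T_op2: "op2 H \<Longrightarrow> T a \<Longrightarrow> T b \<Longrightarrow> T (\<lambda>x. H (a x) (b x))"
  unfolding op1_def by (rule tot_op2) auto

lemma T_add: "T a \<Longrightarrow> T b \<Longrightarrow> T (\<lambda>x. a x + b x)" by (rule T_op2[OF op2_add])
lemma T_sub: "T a \<Longrightarrow> T b \<Longrightarrow> T (\<lambda>x. a x - b x)" by (rule T_op2[OF op2_sub])
lemma T_mult: "T a \<Longrightarrow> T b \<Longrightarrow> T (\<lambda>x. a x * b x)" by (rule T_op2[OF op2_mult])
lemma T_pair: "T a \<Longrightarrow> T b \<Longrightarrow> T (\<lambda>x. pair (a x) (b x))" by (rule T_op2[OF op2_pair])
lemma T_pf: "T a \<Longrightarrow> T (\<lambda>x. pf (a x))" by (rule T_comp[OF op1_pf])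
lemma T_ps: "T a \<Longrightarrow> T (\<lambda>x. ps (a x))" by (rule T_comp[OF op1_ps])
lemma T_Suc: "T a \<Longrightarrow> T (\<lambda>x. Suc (a x))" by (rule T_comp[OF op1_succ])
lemma T_pow2: "T a \<Longrightarrow> T (\<lambda>x. 2 ^ (a x))" by (rule T_comp[OF op1_pow2])

lemmas T_base = T_id T_const T_add T_sub T_mult T_pair T_pf T_ps T_Suc T_pow2

primrec PR :: "(nat \<Rightarrow> nat) \<Rightarrow> (nat \<Rightarrow> nat \<Rightarrow> nat \<Rightarrow> nat) \<Rightarrow> nat \<Rightarrow> nat \<Rightarrow> nat" where
  "PR F G 0 x = F x"
| "PR F G (Suc k) x = G (PR F G k x) k x"

lemma T_PR:
  assumes F: "T F" and G: "T (\<lambda>t. G (pf t) (pf (ps t)) (ps (ps t)))" and a: "T a" and b: "T b"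
  shows "T (\<lambda>x. PR F G (a x) (b x))"
proof -
  have g3: "tot 3 (\<lambda>zs. G (zs!0) (zs!1) (zs!2))"
  proof -
    have A: "tot 3 (\<lambda>zs. (\<lambda>t. G (pf t) (pf (ps t)) (ps (ps t))) (pair (zs!0) (pair (zs!1) (zs!2))))"
      by (rule tot_op1[OF G]) (simp add: tot_op2[OF op2_pair] tot_proj)
    then show ?thesis by simp
  qed
  have A: "tot 2 (\<lambda>xs. PRL (\<lambda>ys. F (hd ys)) (\<lambda>zs. G (zs!0) (zs!1) (zs!2)) (hd xs) (tl xs))"
    using tot_prim[of 1 "\<lambda>ys. F (hd ys)" "\<lambda>zs. G (zs!0) (zs!1) (zs!2)"] F g3
    by (simp add: op1_def numeral_3_eq_3 numeral_2_eq_2)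
  have E: "PRL (\<lambda>ys. F (hd ys)) (\<lambda>zs. G (zs!0) (zs!1) (zs!2)) k [y] = PR F G k y" for k y
    by (induction k) auto
  have "op2 (PR F G)" unfolding op2_def using E by (intro tot_cong[OF A]) (auto simp: length_Suc_conv numeral_2_eq_2)
  then show ?thesis using a b by (rule T_op2)
qed



lemma T_ext: "T f \<Longrightarrow> (\<And>x. f x = g x) \<Longrightarrow> T g"
proof -
  assume "T f" "\<And>x. f x = g x"
  then have "f = g" by auto
  with \<open>T f\<close> show ?thesis by simp
qed

definition Tp :: "(nat \<Rightarrow> bool) \<Rightarrow> bool" where "Tp P \<longleftrightarrow> T (\<lambda>x. if P x then 1 else 0)"

lemma Tp_eq: assumes "T a" "T b" shows "Tp (\<lambda>x. a x = b x)"
  unfolding Tp_def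
  by (rule T_ext[of "\<lambda>x. 1 - ((a x - b x) + (b x - a x))"], intro T_base assms, auto)




lemma Tp_less: assumes "T a" "T b" shows "Tp (\<lambda>x. a x < b x)"
  unfolding Tp_def
  by (rule T_ext[of "\<lambda>x. 1 - (1 - (b x - a x))"], intro T_base assms, simp)

lemma Tp_not: assumes "Tp P" shows "Tp (\<lambda>x. \<not> P x)"
  unfolding Tp_def
  by (rule T_ext[of "\<lambda>x. 1 - (if P x then 1 else 0)"], intro T_base assms[unfolded Tp_def], simp)

lemma Tp_conj: assumes "Tp P" "Tp Q" shows "Tp (\<lambda>x. P x \<and> Q x)"
  unfolding Tp_def
  by (rule T_ext[of "\<lambda>x. (if P x then 1 else 0) * (if Q x then 1 else 0)"], intro T_base assms[unfolded Tp_def], simp)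

lemma Tp_disj: assumes "Tp P" "Tp Q" shows "Tp (\<lambda>x. P x \<or> Q x)"
  unfolding Tp_def
  by (rule T_ext[of "\<lambda>x. 1 - (1 - ((if P x then 1 else 0) + (if Q x then 1 else 0)))"], intro T_base assms[unfolded Tp_def], simp)

lemma Tp_imp: "Tp P \<Longrightarrow> Tp Q \<Longrightarrow> Tp (\<lambda>x. P x \<longrightarrow> Q x)"
  by (drule Tp_not, drule (1) Tp_disj, simp)

lemma Tp_le: "T a \<Longrightarrow> T b \<Longrightarrow> Tp (\<lambda>x. a x \<le> b x)"
  by (drule (1) Tp_less[of b a], drule Tp_not, simp add: not_less)

lemma Tp_const: "Tp (\<lambda>x. c)"
  unfolding Tp_def by (rule T_const)

lemma T_if: assumes "Tp P" "T a" "T b" shows "T (\<lambda>x. if P x then a x else b x)"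
  by (rule T_ext[of "\<lambda>x. (if P x then 1 else 0) * a x + (1 - (if P x then 1 else 0)) * b x"], intro T_base assms(2,3) assms(1)[unfolded Tp_def], simp)

lemma Tp_comp: "Tp P \<Longrightarrow> T a \<Longrightarrow> Tp (\<lambda>x. P (a x))"
  unfolding Tp_def by (rule T_comp)



lemma Tp_bex:
  assumes Q: "Tp (\<lambda>p. Q (pf p) (ps p))" and b: "T b"
  shows "Tp (\<lambda>x. \<exists>m<b x. Q m x)"
proof -
  let ?G = "\<lambda>y k x. if y = 1 \<or> Q k x then 1 else (0::nat)"
  have "T (\<lambda>x. PR (\<lambda>x. 0) ?G (b x) x)"
  proof (rule T_PR[OF T_const _ b T_id])
    have "Tp (\<lambda>t. pf t = 1 \<or> Q (pf (ps t)) (ps (ps t)))"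
      by (intro Tp_disj Tp_eq T_base Tp_comp[OF Q, of ps])
    then show "T (\<lambda>t. ?G (pf t) (pf (ps t)) (ps (ps t)))" unfolding Tp_def by simp
  qed
  moreover have "PR (\<lambda>x. 0) ?G k x = (if \<exists>m<k. Q m x then 1 else 0)" for k x
    by (induction k) (auto simp: less_Suc_eq)
  ultimately show ?thesis unfolding Tp_def by simp
qed

lemma Tp_ball:
  assumes Q: "Tp (\<lambda>p. Q (pf p) (ps p))" and b: "T b"
  shows "Tp (\<lambda>x. \<forall>m<b x. Q m x)"
proof -
  have "Tp (\<lambda>x. \<not> (\<exists>m<b x. \<not> Q m x))"
    by (rule Tp_not, rule Tp_bex[OF _ b], rule Tp_not[OF Q])
  then show ?thesis by simp
qed

lemma T_sum:
  assumes f: "T (\<lambda>p. f (pf p) (ps p))" and b: "T b"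
  shows "T (\<lambda>x. \<Sum>m<b x. f m x)"
proof -
  let ?G = "\<lambda>y k x. y + f k x"
  have "T (\<lambda>x. PR (\<lambda>x. 0) ?G (b x) x)"
  proof (rule T_PR[OF T_const _ b T_id])
    show "T (\<lambda>t. ?G (pf t) (pf (ps t)) (ps (ps t)))"
      by (intro T_add T_pf T_id T_comp[OF f, of ps] T_ps)
  qed
  moreover have "PR (\<lambda>x. 0) ?G k x = (\<Sum>m<k. f m x)" for k x
    by (induction k) auto
  ultimately show ?thesis by simp
qed

lemma T_iter:
  assumes f: "T f" and a: "T a" and b: "T b"
  shows "T (\<lambda>x. (f ^^ a x) (b x))"
proof -
  let ?G = "\<lambda>y k x. f y"
  have "T (\<lambda>x. PR (\<lambda>x. x) ?G (a x) (b x))"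
    by (rule T_PR[OF T_id _ a b]) (intro T_comp[OF f] T_pf T_id)
  moreover have "PR (\<lambda>x. x) ?G k x = (f ^^ k) x" for k x
    by (induction k) auto
  ultimately show ?thesis by simp
qed

definition bleast :: "(nat \<Rightarrow> bool) \<Rightarrow> nat \<Rightarrow> nat" where
  "bleast P b = (if \<exists>m<b. P m then LEAST m. P m else b)"

lemma T_bleast:
  assumes Q: "Tp (\<lambda>p. Q (pf p) (ps p))" and b: "T b"
  shows "T (\<lambda>x. bleast (\<lambda>m. Q m x) (b x))"
proof -
  let ?G = "\<lambda>y k x. if y < k then y else if Q k x then k else Suc k"
  have "T (\<lambda>x. PR (\<lambda>x. 0) ?G (b x) x)"
  proof (rule T_PR[OF T_const _ b T_id])
    show "T (\<lambda>t. ?G (pf t) (pf (ps t)) (ps (ps t)))"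
      by (intro T_if Tp_less T_Suc T_pf T_ps T_id Tp_comp[OF Q, of ps])
  qed
  moreover have "PR (\<lambda>x. 0) ?G k x = bleast (\<lambda>m. Q m x) k" for k x
  proof (induction k)
    case 0 then show ?case by (simp add: bleast_def)
  next
    case (Suc k)
    show ?case
    proof (cases "\<exists>m<k. Q m x")
      case True
      then obtain m where "m < k" "Q m x" by blast
      then have "(LEAST m. Q m x) < k" using Least_le[of "\<lambda>m. Q m x" m] by linarith
      then show ?thesis using True Suc \<open>m < k\<close> \<open>Q m x\<close> by (auto simp: bleast_def intro: exI[of _ m])
    next
      case False
      then have *: "(\<exists>m<Suc k. Q m x) = Q k x" by (auto simp: less_Suc_eq)
      have "Q k x \<Longrightarrow> (LEAST m. Q m x) = k" using False by (intro Least_equality) (auto simp: not_less[symmetric])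
      then show ?thesis using False Suc * by (auto simp: bleast_def)
    qed
  qed
  ultimately show ?thesis by simp
qed

lemma bleast_less: "bleast P b < b \<longleftrightarrow> (\<exists>m<b. P m)"
proof (cases "\<exists>m<b. P m")
  case True
  then obtain m where "m < b" "P m" by blast
  then have "(LEAST m. P m) < b" using Least_le[of P m] by linarith
  then show ?thesis using True by (simp add: bleast_def)
qed (auto simp: bleast_def)

lemma bleast_eq: "\<exists>m<b. P m \<Longrightarrow> bleast P b = (LEAST m. P m)"
  unfolding bleast_def by auto



definition lhd :: "nat \<Rightarrow> nat" where "lhd c = pf (c - 1)"
definition ltl :: "nat \<Rightarrow> nat" where "ltl c = (if c = 0 then 0 else ps (c - 1))"
definition lcons :: "nat \<Rightarrow> nat \<Rightarrow> nat" where "lcons a c = Suc (pair a c)"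
definition llen :: "nat \<Rightarrow> nat" where "llen c = length (list_decode c)"
definition lnth :: "nat \<Rightarrow> nat \<Rightarrow> nat" where
  "lnth c k = (if k < llen c then list_decode c ! k else 0)"

lemma list_decode_Suc: "list_decode (Suc n) = pf n # list_decode (ps n)"
  by (simp add: pf_def ps_def split: prod.split)

declare list_decode.simps(2)[simp del]
declare list_decode_Suc[simp]

lemma list_encode_cons: "list_encode (x # xs) = lcons x (list_encode xs)"
  by (simp add: lcons_def pair_def)

lemma list_decode_lcons[simp]: "list_decode (lcons a c) = a # list_decode c"
  by (simp add: lcons_def list_decode_Suc)

lemma list_decode_ltl: "list_decode (ltl c) = tl (list_decode c)"
  by (cases c) (auto simp: ltl_def list_decode_Suc)

lemma list_decode_lhd: "list_decode c \<noteq> [] \<Longrightarrow> lhd c = hd (list_decode c)"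
  by (cases c) (auto simp: lhd_def list_decode_Suc)

lemma list_decode_iter_ltl: "list_decode ((ltl ^^ k) c) = drop k (list_decode c)"
  by (induction k) (auto simp: list_decode_ltl drop_Suc tl_drop)

lemma length_le_list_encode: "length xs \<le> list_encode xs"
proof (induction xs)
  case (Cons x xs)
  then show ?case using le_prod_encode_2[of "list_encode xs" x] by simp
qed simp

lemma llen_le: "llen c \<le> c"
  unfolding llen_def using length_le_list_encode[of "list_decode c"] by simp

lemma iter_ltl_zero: "(ltl ^^ k) c = 0 \<longleftrightarrow> llen c \<le> k"
proof -
  have "(ltl ^^ k) c = 0 \<longleftrightarrow> list_decode ((ltl ^^ k) c) = []"
    by (metis list_decode.simps(1) list_decode_inverse list_encode.simps(1))
  then show ?thesis by (simp add: list_decode_iter_ltl llen_def)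
qed

lemma llen_bleast: "llen c = bleast (\<lambda>k. (ltl ^^ k) c = 0) (Suc c)"
proof -
  have ex: "\<exists>m<Suc c. (ltl ^^ m) c = 0" using llen_le[of c] iter_ltl_zero[of "llen c" c] by (intro exI[of _ "llen c"]) auto
  have "(LEAST k. (ltl ^^ k) c = 0) = llen c"
    by (rule Least_equality) (auto simp: iter_ltl_zero)
  then show ?thesis using bleast_eq[OF ex] by simp
qed

lemma lnth_formula: "lnth c k = (if k < llen c then lhd ((ltl ^^ k) c) else 0)"
proof (cases "k < llen c")
  case True
  then have "list_decode ((ltl ^^ k) c) \<noteq> []" by (simp add: list_decode_iter_ltl llen_def)
  then have "lhd ((ltl ^^ k) c) = hd (drop k (list_decode c))"
    by (simp add: list_decode_lhd list_decode_iter_ltl)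
  also have "\<dots> = list_decode c ! k" using True by (simp add: llen_def hd_drop_conv_nth)
  finally show ?thesis using True by (simp add: lnth_def)
qed (simp add: lnth_def)

lemma op1_ltl: "T ltl"
  unfolding ltl_def
  by (intro T_if Tp_eq T_ps T_sub T_id T_const)

lemma op1_lhd: "T lhd"
  unfolding lhd_def by (intro T_pf T_sub T_id T_const)

lemma T_ltl: "T a \<Longrightarrow> T (\<lambda>x. ltl (a x))" by (rule T_comp[OF op1_ltl])
lemma T_lhd: "T a \<Longrightarrow> T (\<lambda>x. lhd (a x))" by (rule T_comp[OF op1_lhd])
lemma T_lcons: "T a \<Longrightarrow> T b \<Longrightarrow> T (\<lambda>x. lcons (a x) (b x))"
  unfolding lcons_def by (intro T_Suc T_pair)

lemma op1_llen: "T llen"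
proof -
  have "T (\<lambda>x. bleast (\<lambda>k. (ltl ^^ k) x = 0) (Suc x))"
    by (intro T_bleast Tp_eq T_iter op1_ltl T_pf T_ps T_const T_Suc T_id)
  then show ?thesis by (simp add: llen_bleast[symmetric])
qed

lemma T_llen: "T a \<Longrightarrow> T (\<lambda>x. llen (a x))" by (rule T_comp[OF op1_llen])

lemma T_lnth: assumes "T a" "T b" shows "T (\<lambda>x. lnth (a x) (b x))"
  unfolding lnth_formula
  by (intro T_if Tp_less T_llen T_lhd T_iter op1_ltl T_const assms)

lemma llen_encode[simp]: "llen (list_encode xs) = length xs" by (simp add: llen_def)
lemma lnth_encode[simp]: "k < length xs \<Longrightarrow> lnth (list_encode xs) k = xs ! k" by (simp add: lnth_def)

section \<open>Strings\<close>

fun str_of :: "nat \<Rightarrow> bool list" where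
  "str_of 0 = []"
| "str_of (Suc k) = odd k # str_of (k div 2)"

lemma str_code_of[simp]: "str_code (str_of n) = n"
  by (induction n rule: str_of.induct) auto

lemma str_of_code[simp]: "str_of (str_code s) = s"
proof (induction s)
  case (Cons b s)
  show ?case
  proof (cases b)
    case True
    then have "str_code (b # s) = Suc (Suc (2 * str_code s))" by simp
    then show ?thesis using Cons True by (simp del: str_code.simps)
  next
    case False
    then have "str_code (b # s) = Suc (2 * str_code s)" by simp
    then show ?thesis using Cons False by (simp del: str_code.simps)
  qed
qed simp

lemma str_code_inj: "str_code s = str_code t \<longleftrightarrow> s = t"
  by (metis str_of_code)

lemma str_code_append: "str_code (s @ t) = str_code s + 2 ^ length s * str_code t"
  by (induction s) (auto simp: algebra_simps)

lemma str_code_bounds: "2 ^ length s - 1 \<le> str_code s \<and> str_code s < 2 ^ (length s + 1) - 1"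
proof (induction s)
  case (Cons b s)
  then show ?case by (cases b) (auto simp: algebra_simps)
qed simp

definition slen :: "nat \<Rightarrow> nat" where "slen n = length (str_of n)"

lemma slen_bleast: "slen n = bleast (\<lambda>k. n < 2 ^ (k + 1) - 1) (Suc n)"
proof -
  let ?s = "str_of n"
  have b: "2 ^ length ?s - 1 \<le> n" "n < 2 ^ (length ?s + 1) - 1"
    using str_code_bounds[of ?s] by auto
  have lt: "length ?s < Suc n"
  proof -
    have "length ?s < 2 ^ length ?s" by (rule less_exp)
    then show ?thesis using b(1) by linarith
  qed
  have ex: "\<exists>m<Suc n. n < 2 ^ (m + 1) - 1" using lt b(2) by blast
  have "(LEAST k. n < 2 ^ (k + 1) - 1) = length ?s"
  proof (rule Least_equality)
    show "n < 2 ^ (length ?s + 1) - 1" by (rule b(2))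
  next
    fix y assume "n < 2 ^ (y + 1) - 1"
    show "length ?s \<le> y"
    proof (rule ccontr)
      assume "\<not> length ?s \<le> y"
      then have "y + 1 \<le> length ?s" by simp
      then have "(2::nat) ^ (y + 1) \<le> 2 ^ length ?s" by (rule power_increasing) simp
      then show False using b(1) \<open>n < 2 ^ (y + 1) - 1\<close> by linarith
    qed
  qed
  then show ?thesis using bleast_eq[OF ex] by (simp add: slen_def)
qed

lemma op1_slen: "T slen"
proof -
  have "T (\<lambda>x. bleast (\<lambda>k. x < 2 ^ (k + 1) - 1) (Suc x))"
    by (intro T_bleast Tp_less T_sub T_pow2 T_add T_pf T_ps T_const T_Suc T_id)
  then show ?thesis using slen_bleast by presburger
qed

definition pc :: "nat \<Rightarrow> nat \<Rightarrow> bool" where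
  "pc a b \<longleftrightarrow> (\<exists>c<Suc b. b = a + 2 ^ slen a * c)"

lemma pc_iff: "pc (str_code s) (str_code t) \<longleftrightarrow> (\<exists>u. t = s @ u)"
proof
  assume "pc (str_code s) (str_code t)"
  then obtain c where "str_code t = str_code s + 2 ^ length s * c"
    by (auto simp: pc_def slen_def)
  then have "str_code t = str_code (s @ str_of c)" by (simp add: str_code_append)
  then show "\<exists>u. t = s @ u" by (auto simp: str_code_inj)
next
  assume "\<exists>u. t = s @ u"
  then obtain u where t: "t = s @ u" by blast
  have "str_code u \<le> 2 ^ length s * str_code u" by simp
  then have "str_code u < Suc (str_code s + 2 ^ length s * str_code u)" by linarith
  then show "pc (str_code s) (str_code t)"
    unfolding pc_def slen_def t str_of_code str_code_append by (intro exI[of _ "str_code u"]) auto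
qed

lemma Tp_pc: assumes "T a" "T b" shows "Tp (\<lambda>x. pc (a x) (b x))"
  unfolding pc_def
  by (intro Tp_bex Tp_eq T_add T_mult T_pow2 T_comp[OF op1_slen] T_Suc T_pf T_ps T_id assms T_comp[OF assms(1)] T_comp[OF assms(2)])



primrec rc :: "recf \<Rightarrow> nat" where
  "rc Zero = pair 0 0"
| "rc Succ = pair 1 0"
| "rc (Proj i) = pair 2 i"
| "rc (Comp f gs) = pair 3 (pair (rc f) (list_encode (map rc gs)))"
| "rc (Prim f g) = pair 4 (pair (rc f) (rc g))"
| "rc (Mini f) = pair 5 (rc f)"

definition line :: "nat \<Rightarrow> nat list \<Rightarrow> nat \<Rightarrow> nat" where
  "line c xs v = pair c (pair (list_encode xs) v)"

definition okL :: "((nat \<Rightarrow> bool) \<Rightarrow> bool) \<Rightarrow> nat \<Rightarrow> nat \<Rightarrow> nat \<Rightarrow> bool" where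
 "okL E c a v \<longleftrightarrow>
   (pf c = 0 \<and> v = 0) \<or>
   (pf c = 1 \<and> 0 < llen a \<and> v = Suc (lhd a)) \<or>
   (pf c = 2 \<and> ps c < llen a \<and> v = lnth a (ps c)) \<or>
   (pf c = 3 \<and> E (\<lambda>l'. pf l' = pf (ps c) \<and> ps (ps l') = v \<and> llen (pf (ps l')) = llen (ps (ps c)) \<and>
        (\<forall>k<llen (ps (ps c)). E (\<lambda>l''. l'' = pair (lnth (ps (ps c)) k) (pair a (lnth (pf (ps l')) k)))))) \<or>
   (pf c = 4 \<and> 0 < llen a \<and> lhd a = 0 \<and> E (\<lambda>l'. l' = pair (pf (ps c)) (pair (ltl a) v))) \<or>
   (pf c = 4 \<and> 0 < llen a \<and> 0 < lhd a \<and> E (\<lambda>l'. pf l' = c \<and> pf (ps l') = lcons (lhd a - 1) (ltl a) \<and>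
        E (\<lambda>l''. l'' = pair (ps (ps c)) (pair (lcons (ps (ps l')) (lcons (lhd a - 1) (ltl a))) v)))) \<or>
   (pf c = 5 \<and> E (\<lambda>l'. l' = pair (ps c) (pair (lcons v a) 0)) \<and>
        (\<forall>m<v. E (\<lambda>l'. pf l' = ps c \<and> pf (ps l') = lcons m a \<and> 0 < ps (ps l'))))"

definition valid :: "nat \<Rightarrow> bool" where
  "valid L \<longleftrightarrow> (\<forall>j<llen L. okL (\<lambda>P. \<exists>j'<j. P (lnth L j')) (pf (lnth L j)) (pf (ps (lnth L j))) (ps (ps (lnth L j))))"

lemma Tp_valid: "Tp valid"
  unfolding valid_def okL_def
  by (intro Tp_ball Tp_bex Tp_disj Tp_conj Tp_eq Tp_less T_llen T_lnth T_lhd T_ltl T_lcons T_pair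
      T_pf T_ps T_Suc T_sub T_const T_id)


declare list_encode.simps(2)[simp del]
declare list_encode_cons[simp]

lemma lhd_lcons[simp]: "lhd (lcons a c) = a" by (simp add: lhd_def lcons_def)
lemma ltl_lcons[simp]: "ltl (lcons a c) = c" by (simp add: ltl_def lcons_def)
lemma llen_lcons[simp]: "llen (lcons a c) = Suc (llen c)" by (simp add: llen_def)
lemma pf_line[simp]: "pf (line c xs v) = c" and pfps_line[simp]: "pf (ps (line c xs v)) = list_encode xs"
  and psps_line[simp]: "ps (ps (line c xs v)) = v"
  by (simp_all add: line_def)

lemma line_decomp: "l = line (pf l) (list_decode (pf (ps l))) (ps (ps l))"
  by (simp add: line_def)

lemma okL_sound:
  assumes ok: "okL E (rc r) (list_encode xs) v"
    and E: "\<And>P. E P \<Longrightarrow> \<exists>l. P l \<and> (\<forall>r' xs' v'. l = line (rc r') xs' v' \<longrightarrow> eval r' xs' v')"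
  shows "eval r xs v"
proof (cases r)
  case Zero
  then show ?thesis using ok by (simp add: okL_def eval_zero)
next
  case Succ
  then have "0 < length xs" "v = Suc (lhd (list_encode xs))" using ok by (simp_all add: okL_def)
  then obtain x xs' where "xs = x # xs'" by (cases xs) auto
  then show ?thesis using Succ \<open>v = _\<close> by (simp add: list_encode_cons eval_succ)
next
  case (Proj i)
  then have "i < length xs" "v = xs ! i" using ok by (simp_all add: okL_def)
  then show ?thesis using Proj by (simp add: eval_proj)
next
  case (Comp f gs)
  let ?gc = "list_encode (map rc gs)"
  have "E (\<lambda>l'. pf l' = rc f \<and> ps (ps l') = v \<and> llen (pf (ps l')) = length gs \<and>
        (\<forall>k<length gs. E (\<lambda>l''. l'' = pair (lnth ?gc k) (pair (list_encode xs) (lnth (pf (ps l')) k)))))"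
    using ok Comp by (simp add: okL_def)
  then obtain l where l: "pf l = rc f" "ps (ps l) = v" "llen (pf (ps l)) = length gs"
    "\<forall>k<length gs. E (\<lambda>l''. l'' = pair (lnth ?gc k) (pair (list_encode xs) (lnth (pf (ps l)) k)))"
    and lIH: "\<forall>r' xs' v'. l = line (rc r') xs' v' \<longrightarrow> eval r' xs' v'"
    using E by blast
  define ys where "ys = list_decode (pf (ps l))"
  have leq: "l = line (rc f) ys v" using line_decomp[of l] l by (simp add: ys_def)
  have evf: "eval f ys v" using lIH leq by blast
  have len: "length ys = length gs" using l(3) by (simp add: ys_def llen_def)
  have "eval (gs ! k) xs (ys ! k)" if k: "k < length gs" for k
  proof -
    have "lnth (pf (ps l)) k = ys ! k" using k len by (simp add: ys_def lnth_def llen_def)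
    moreover have "lnth ?gc k = rc (gs ! k)" using k by simp
    ultimately have "E (\<lambda>l''. l'' = line (rc (gs ! k)) xs (ys ! k))"
      using l(4) k unfolding line_def by metis
    then show ?thesis using E by blast
  qed
  then have "list_all2 (\<lambda>g y. eval g xs y) gs ys" using len by (simp add: list_all2_conv_all_nth)
  then show ?thesis using Comp evf by (simp add: eval_comp)
next
  case (Prim f g)
  have ne: "0 < length xs" using ok Prim by (auto simp: okL_def)
  then obtain x xs' where xs: "xs = x # xs'" by (cases xs) auto
  show ?thesis
  proof (cases x)
    case 0
    then have "E (\<lambda>l'. l' = line (rc f) xs' v)" using ok Prim xs by (simp add: okL_def list_encode_cons line_def)
    then have "eval f xs' v" using E by blast
    then show ?thesis using Prim xs 0 by (simp add: eval_prim0)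
  next
    case (Suc n)
    then have "E (\<lambda>l'. pf l' = rc (Prim f g) \<and> pf (ps l') = list_encode (n # xs') \<and>
        E (\<lambda>l''. l'' = line (rc g) (ps (ps l') # n # xs') v))"
      using ok Prim xs by (simp add: okL_def list_encode_cons line_def)
    then obtain l where l: "pf l = rc (Prim f g)" "pf (ps l) = list_encode (n # xs')"
      "E (\<lambda>l''. l'' = line (rc g) (ps (ps l) # n # xs') v)"
      and lIH: "\<forall>r' xs' v'. l = line (rc r') xs' v' \<longrightarrow> eval r' xs' v'"
      using E by blast
    have "l = line (rc (Prim f g)) (n # xs') (ps (ps l))" using line_decomp[of l] l by simp
    then have e1: "eval (Prim f g) (n # xs') (ps (ps l))" using lIH by blast
    have e2: "eval g (ps (ps l) # n # xs') v" using l(3) E by blast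
    show ?thesis using eval_primS[OF e1 e2] Prim xs Suc by simp
  qed
next
  case (Mini f)
  have "E (\<lambda>l'. l' = line (rc f) (v # xs) 0)" using ok Mini by (simp add: okL_def list_encode_cons line_def)
  then have e0: "eval f (v # xs) 0" using E by blast
  have "\<exists>k. eval f (m # xs) (Suc k)" if m: "m < v" for m
  proof -
    have "E (\<lambda>l'. pf l' = rc f \<and> pf (ps l') = list_encode (m # xs) \<and> 0 < ps (ps l'))"
      using ok Mini m by (simp add: okL_def list_encode_cons)
    then obtain l where l: "pf l = rc f" "pf (ps l) = list_encode (m # xs)" "0 < ps (ps l)"
      and lIH: "\<forall>r' xs' v'. l = line (rc r') xs' v' \<longrightarrow> eval r' xs' v'"
      using E by blast
    have "l = line (rc f) (m # xs) (ps (ps l))" using line_decomp[of l] l by simp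
    then have "eval f (m # xs) (ps (ps l))" using lIH by blast
    then show ?thesis using l(3) by (metis Suc_pred)
  qed
  then show ?thesis using Mini e0 by (simp add: eval_mini)
qed

lemma valid_sound:
  assumes "valid L" "j < llen L" "lnth L j = line (rc r) xs v"
  shows "eval r xs v"
  using assms(2,3)
proof (induction j arbitrary: r xs v rule: less_induct)
  case (less j)
  have ok: "okL (\<lambda>P. \<exists>j'<j. P (lnth L j')) (rc r) (list_encode xs) v"
    using assms(1) less.prems unfolding valid_def by (metis pf_line pfps_line psps_line)
  show ?case
  proof (rule okL_sound[OF ok])
    fix P assume "\<exists>j'<j. P (lnth L j')"
    then obtain j' where j': "j' < j" "P (lnth L j')" by blast
    show "\<exists>l. P l \<and> (\<forall>r' xs' v'. l = line (rc r') xs' v' \<longrightarrow> eval r' xs' v')"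
      using j' less.IH less.prems(1) by (intro exI[of _ "lnth L j'"]) auto
  qed
qed



abbreviation ES :: "nat set \<Rightarrow> (nat \<Rightarrow> bool) \<Rightarrow> bool" where "ES S \<equiv> (\<lambda>P. \<exists>l\<in>S. P l)"

definition validS :: "nat list \<Rightarrow> bool" where
  "validS ls \<longleftrightarrow> (\<forall>j<length ls. okL (ES (set (take j ls))) (pf (ls!j)) (pf (ps (ls!j))) (ps (ps (ls!j))))"

lemma valid_encode: "valid (list_encode ls) \<longleftrightarrow> validS ls"
proof -
  have "(\<lambda>P. \<exists>j'<j. P (lnth (list_encode ls) j')) = ES (set (take j ls))" if "j < length ls" for j
  proof (rule ext)
    fix P
    have "(\<exists>j'<j. P (lnth (list_encode ls) j')) = (\<exists>j'<j. P (ls ! j'))"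
      using that by (metis lnth_encode order.strict_trans)
    also have "\<dots> = (\<exists>l\<in>set (take j ls). P l)"
    proof
      assume "\<exists>j'<j. P (ls ! j')"
      then obtain j' where "j' < j" "P (ls ! j')" by blast
      then show "\<exists>l\<in>set (take j ls). P l" using that
        by (intro bexI[of _ "ls ! j'"]) (auto simp: in_set_conv_nth intro!: exI[of _ j'])
    next
      assume "\<exists>l\<in>set (take j ls). P l"
      then obtain i where "i < length (take j ls)" "P (take j ls ! i)" by (auto simp: in_set_conv_nth)
      then show "\<exists>j'<j. P (ls ! j')" by auto
    qed
    finally show "(\<exists>j'<j. P (lnth (list_encode ls) j')) = (\<exists>l\<in>set (take j ls). P l)" .
  qed
  then show ?thesis unfolding valid_def validS_def by auto
qed

lemma okL_mono_gen:
  assumes ok: "okL E c a v" and H: "\<And>P Q. E P \<Longrightarrow> (\<And>l. P l \<Longrightarrow> Q l) \<Longrightarrow> E' Q"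
  shows "okL E' c a v"
  using ok unfolding okL_def
  apply (elim disjE)
  apply (rule disjI1, assumption)
  apply (rule disjI2, rule disjI1, assumption)
  apply (rule disjI2, rule disjI2, rule disjI1, assumption)
  apply (rule disjI2, rule disjI2, rule disjI2, rule disjI1)
  apply (elim conjE, intro conjI, assumption)
  apply (erule H)
  apply (elim conjE, intro conjI, assumption+)
  apply (intro allI impI, erule allE, erule (1) impE, erule H, assumption)
  apply (rule disjI2, rule disjI2, rule disjI2, rule disjI2, rule disjI1)
  apply (elim conjE, intro conjI, assumption+)
  apply (erule H, assumption)
  apply (rule disjI2, rule disjI2, rule disjI2, rule disjI2, rule disjI2, rule disjI1)
  apply (elim conjE, intro conjI, assumption+)
  apply (erule H)
  apply (elim conjE, intro conjI, assumption+)
  apply (erule H, assumption)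
  apply (rule disjI2, rule disjI2, rule disjI2, rule disjI2, rule disjI2, rule disjI2)
  apply (elim conjE, intro conjI, assumption)
  apply (erule H, assumption)
  apply (intro allI impI, erule allE, erule (1) impE, erule H, assumption)
  done

lemma okL_mono: "S \<subseteq> S' \<Longrightarrow> okL (ES S) c a v \<Longrightarrow> okL (ES S') c a v"
  by (erule okL_mono_gen) blast

lemma validS_append: "validS a \<Longrightarrow> validS b \<Longrightarrow> validS (a @ b)"
  unfolding validS_def
proof (intro allI impI)
  fix j assume va: "\<forall>j<length a. okL (ES (set (take j a))) (pf (a ! j)) (pf (ps (a ! j))) (ps (ps (a ! j)))"
    and vb: "\<forall>j<length b. okL (ES (set (take j b))) (pf (b ! j)) (pf (ps (b ! j))) (ps (ps (b ! j)))"
    and j: "j < length (a @ b)"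
  show "okL (ES (set (take j (a @ b)))) (pf ((a @ b) ! j)) (pf (ps ((a @ b) ! j))) (ps (ps ((a @ b) ! j)))"
  proof (cases "j < length a")
    case True then show ?thesis using va by (simp add: nth_append)
  next
    case False
    then have j': "j - length a < length b" using j by simp
    have "set (take (j - length a) b) \<subseteq> set (take j (a @ b))" using False by auto
    moreover have "okL (ES (set (take (j - length a) b))) (pf (b ! (j - length a))) (pf (ps (b ! (j - length a)))) (ps (ps (b ! (j - length a))))"
      using vb j' by blast
    ultimately have "okL (ES (set (take j (a @ b)))) (pf (b ! (j - length a))) (pf (ps (b ! (j - length a)))) (ps (ps (b ! (j - length a))))"
      by (rule okL_mono)
    then show ?thesis using False by (simp add: nth_append)
  qed
qed

lemma validS_snoc: "validS a \<Longrightarrow> okL (ES (set a)) (pf l) (pf (ps l)) (ps (ps l)) \<Longrightarrow> validS (a @ [l])"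
  unfolding validS_def by (auto simp: nth_append less_Suc_eq)

lemma validS_Nil: "validS []" by (simp add: validS_def)

lemma gather:
  fixes n :: nat
  assumes "\<And>k. k < n \<Longrightarrow> \<exists>ls. validS ls \<and> x k \<in> set ls"
  shows "\<exists>ls. validS ls \<and> (\<forall>k<n. x k \<in> set ls)"
  using assms
proof (induction n)
  case 0 then show ?case using validS_Nil by auto
next
  case (Suc n)
  then obtain ls where ls: "validS ls" "\<forall>k<n. x k \<in> set ls" by auto
  obtain ls' where ls': "validS ls'" "x n \<in> set ls'" using Suc.prems by auto
  show ?case using validS_append[OF ls(1) ls'(1)] ls ls' by (intro exI[of _ "ls @ ls'"]) (auto simp: less_Suc_eq)
qed

lemma finish:
  assumes "validS ls" "okL (ES (set ls)) c (list_encode xs) v"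
  shows "\<exists>ls. validS ls \<and> line c xs v \<in> set ls"
  using validS_snoc[OF assms(1), of "line c xs v"] assms(2) by (intro exI[of _ "ls @ [line c xs v]"]) auto

lemma complete: "eval r xs v \<Longrightarrow> \<exists>ls. validS ls \<and> line (rc r) xs v \<in> set ls"
proof (induction rule: eval.induct)
  case (eval_zero xs)
  show ?case by (rule finish[OF validS_Nil]) (unfold okL_def, rule disjI1, simp)
next
  case (eval_succ x xs)
  show ?case by (rule finish[OF validS_Nil]) (unfold okL_def, rule disjI2, rule disjI1, simp)
next
  case (eval_proj i xs)
  show ?case by (rule finish[OF validS_Nil]) (unfold okL_def, rule disjI2, rule disjI2, rule disjI1, simp add: eval_proj)
next
  case (eval_comp xs gs ys f z)
  have len: "length ys = length gs" using eval_comp.IH(1) by (simp add: list_all2_conv_all_nth)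
  have "\<exists>ls. validS ls \<and> (\<forall>k<length gs. line (rc (gs ! k)) xs (ys ! k) \<in> set ls)"
    by (rule gather) (use eval_comp.IH(1) in \<open>auto simp: list_all2_conv_all_nth\<close>)
  then obtain ls1 where ls1: "validS ls1" "\<forall>k<length gs. line (rc (gs ! k)) xs (ys ! k) \<in> set ls1" by blast
  obtain ls2 where ls2: "validS ls2" "line (rc f) ys z \<in> set ls2" using eval_comp.IH(2) by blast
  let ?S = "set (ls1 @ ls2)"
  show ?case
  proof (rule finish[OF validS_append[OF ls1(1) ls2(1)]])
    have A: "\<forall>k<length gs. pair (rc (gs ! k)) (pair (list_encode xs) (lnth (list_encode ys) k)) \<in> ?S"
      using ls1(2) len by (auto simp: line_def)
    have B: "line (rc f) ys z \<in> ?S" using ls2(2) by simp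
    show "okL (ES ?S) (rc (Comp f gs)) (list_encode xs) z"
      unfolding okL_def
      apply (rule disjI2, rule disjI2, rule disjI2, rule disjI1)
      apply (rule conjI, simp)
      apply (rule bexI[OF _ B])
      using A len by simp
  qed
next
  case (eval_prim0 f xs z g)
  then obtain ls where ls: "validS ls" "line (rc f) xs z \<in> set ls" by blast
  show ?case
    apply (rule finish[OF ls(1)])
    unfolding okL_def
    apply (rule disjI2, rule disjI2, rule disjI2, rule disjI2, rule disjI1)
    using ls(2) by (simp add: line_def)
next
  case (eval_primS f g n xs y z)
  obtain ls1 where ls1: "validS ls1" "line (rc (Prim f g)) (n # xs) y \<in> set ls1" using eval_primS.IH(1) by blast
  obtain ls2 where ls2: "validS ls2" "line (rc g) (y # n # xs) z \<in> set ls2" using eval_primS.IH(2) by blast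
  let ?S = "set (ls1 @ ls2)"
  have B1: "line (rc (Prim f g)) (n # xs) y \<in> ?S" using ls1 by simp
  have B2: "line (rc g) (y # n # xs) z \<in> ?S" using ls2 by simp
  show ?case
  proof (rule finish[OF validS_append[OF ls1(1) ls2(1)]])
    show "okL (ES ?S) (rc (Prim f g)) (list_encode (Suc n # xs)) z"
      unfolding okL_def
      apply (rule disjI2, rule disjI2, rule disjI2, rule disjI2, rule disjI2, rule disjI1)
      apply (rule conjI, simp, rule conjI, simp, rule conjI, simp)
      apply (rule bexI[OF _ B1])
      using B2 by (simp add: line_def)
  qed
next
  case (eval_mini f n xs)
  obtain ls0 where ls0: "validS ls0" "line (rc f) (n # xs) 0 \<in> set ls0" using eval_mini.IH(1) by blast
  have "\<forall>m. \<exists>k. m < n \<longrightarrow> eval f (m # xs) (Suc k) \<and> (\<exists>ls. validS ls \<and> line (rc f) (m # xs) (Suc k) \<in> set ls)"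
    using eval_mini.IH(2) by blast
  then obtain kk where kk: "\<And>m. m < n \<Longrightarrow> \<exists>ls. validS ls \<and> line (rc f) (m # xs) (Suc (kk m)) \<in> set ls" by metis
  obtain ls1 where ls1: "validS ls1" "\<forall>m<n. line (rc f) (m # xs) (Suc (kk m)) \<in> set ls1"
    using gather[of n "\<lambda>m. line (rc f) (m # xs) (Suc (kk m))"] kk by blast
  let ?S = "set (ls0 @ ls1)"
  show ?case
  proof (rule finish[OF validS_append[OF ls0(1) ls1(1)]])
    have A: "\<forall>m<n. \<exists>l\<in>?S. pf l = rc f \<and> pf (ps l) = lcons m (list_encode xs) \<and> 0 < ps (ps l)"
    proof (intro allI impI)
      fix m assume "m < n"
      then have "line (rc f) (m # xs) (Suc (kk m)) \<in> ?S" using ls1(2) by simp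
      then show "\<exists>l\<in>?S. pf l = rc f \<and> pf (ps l) = lcons m (list_encode xs) \<and> 0 < ps (ps l)"
        by (intro bexI) simp_all
    qed
    have B: "line (rc f) (n # xs) 0 \<in> ?S" using ls0 by simp
    show "okL (ES ?S) (rc (Mini f)) (list_encode xs) n"
      unfolding okL_def
      apply (rule disjI2, rule disjI2, rule disjI2, rule disjI2, rule disjI2, rule disjI2)
      using A B by (simp add: line_def)
  qed
qed

lemma eval_iff_cert: "(\<exists>v. eval r xs v) \<longleftrightarrow> (\<exists>L. valid L \<and> (\<exists>j<llen L. pf (lnth L j) = rc r \<and> pf (ps (lnth L j)) = list_encode xs))"
proof
  assume "\<exists>v. eval r xs v"
  then obtain v where "eval r xs v" by blast
  from complete[OF this] obtain ls where ls: "validS ls" "line (rc r) xs v \<in> set ls" by blast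
  then obtain j where "j < length ls" "ls ! j = line (rc r) xs v" by (auto simp: in_set_conv_nth)
  then show "\<exists>L. valid L \<and> (\<exists>j<llen L. pf (lnth L j) = rc r \<and> pf (ps (lnth L j)) = list_encode xs)"
    using ls(1) by (intro exI[of _ "list_encode ls"]) (auto simp: valid_encode)
next
  assume "\<exists>L. valid L \<and> (\<exists>j<llen L. pf (lnth L j) = rc r \<and> pf (ps (lnth L j)) = list_encode xs)"
  then obtain L j where L: "valid L" "j < llen L" "pf (lnth L j) = rc r" "pf (ps (lnth L j)) = list_encode xs" by blast
  have "lnth L j = line (rc r) xs (ps (ps (lnth L j)))" using line_decomp[of "lnth L j"] L(3,4) by simp
  then show "\<exists>v. eval r xs v" using valid_sound[OF L(1,2)] by blast
qed



definition W :: "nat \<Rightarrow> nat \<Rightarrow> bool" where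
  "W e n \<longleftrightarrow> valid (pf n) \<and> (\<exists>j<llen (pf n). pf (lnth (pf n) j) = e \<and>
      pf (ps (lnth (pf n) j)) = lcons (e + 3) (lcons (ps n) 0))"

lemma Tp_W: "Tp (\<lambda>p. W (pf p) (ps p))"
  unfolding W_def
  by (intro Tp_conj Tp_comp[OF Tp_valid] Tp_bex Tp_eq T_llen T_lnth T_lcons T_pf T_ps T_add T_const T_id)

lemma Tp_W2: assumes "T a" "T b" shows "Tp (\<lambda>x. W (a x) (b x))"
  using Tp_comp[OF Tp_W T_pair[OF assms]] by simp

lemma W_eval: "(\<exists>L. W (rc r) (pair L m)) \<longleftrightarrow> (\<exists>v. eval r [rc r + 3, m] v)"
  unfolding eval_iff_cert W_def by (simp add: list_encode_cons)

lemma W_eval': "W (rc r) n \<Longrightarrow> \<exists>v. eval r [rc r + 3, ps n] v"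
  using W_eval[of r "ps n"] by (metis pair_pf_ps)

definition A :: "nat \<Rightarrow> nat \<Rightarrow> nat" where
  "A x s = (if x = 0 then 1 else \<Sum>e<s. (if (\<exists>n<s. W e n) \<and> pc x (ps (bleast (W e) s)) then 2 ^ (s - e) else 0))"

definition Cc :: "nat \<Rightarrow> nat \<Rightarrow> nat" where
  "Cc x s = (if x = 0 then 0 else 2 ^ (s + 2) - 1)"

lemma T_A: "T (\<lambda>p. A (pf p) (ps p))"
  unfolding A_def
  by (intro T_if Tp_eq T_sum Tp_conj Tp_bex Tp_W2 Tp_pc T_ps T_bleast T_pow2 T_sub T_add T_pf T_const T_id)

lemma T_Cc: "T (\<lambda>p. Cc (pf p) (ps p))"
  unfolding Cc_def
  by (intro T_if Tp_eq T_pow2 T_sub T_add T_pf T_ps T_const T_id)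

lemma T_eval2:
  assumes "T (\<lambda>p. F (pf p) (ps p))"
  shows "\<exists>r. \<forall>x y. eval r [x, y] (F x y)"
proof -
  have "tot 2 (\<lambda>xs. (\<lambda>p. F (pf p) (ps p)) (pair (xs!0) (xs!1)))"
    by (rule tot_op1[OF assms]) (intro tot_op2[OF op2_pair] tot_proj, simp_all)
  then obtain r where "\<forall>xs. length xs = 2 \<longrightarrow> eval r xs (F (xs!0) (xs!1))" unfolding tot_def by auto
  then show ?thesis by (intro exI[of _ r] allI) (drule spec[of _ "[_, _]"], simp)
qed



definition Dm :: "nat \<Rightarrow> bool" where "Dm e \<longleftrightarrow> (\<exists>n. W e n)"
definition tau :: "nat \<Rightarrow> bool list" where "tau e = str_of (ps (LEAST n. W e n))"
definition w :: "nat \<Rightarrow> real" where "w e = (1/2) ^ (e + 2)"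
definition pre :: "bool list \<Rightarrow> bool list \<Rightarrow> bool" where "pre s t \<longleftrightarrow> (\<exists>u. t = s @ u)"
definition tt :: "bool list \<Rightarrow> nat \<Rightarrow> real" where
  "tt s e = (if Dm e \<and> pre s (tau e) then w e else 0)"
definition rho :: "bool list \<Rightarrow> real" where
  "rho s = (if s = [] then 1 else suminf (tt s))"
definition ts :: "bool list \<Rightarrow> nat \<Rightarrow> nat \<Rightarrow> real" where
  "ts s e k = (if (\<exists>n<k. W e n) \<and> pre s (tau e) then w e else 0)"
definition qq :: "bool list \<Rightarrow> nat \<Rightarrow> real" where
  "qq s k = (if s = [] then 1 else \<Sum>e<k. ts s e k)"

lemma w_pos: "0 < w e" by (simp add: w_def)
lemma w_sums: "w sums (1/2)"
proof -
  have "(\<lambda>e. (1/4) * (1/2::real) ^ e) sums ((1/4) * (1 / (1 - 1/2)))"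
    by (intro sums_mult geometric_sums) simp
  moreover have "w = (\<lambda>e. (1/4) * (1/2::real) ^ e)" by (rule ext) (simp add: w_def power_add)
  ultimately show ?thesis by simp
qed
lemma w_summable: "summable w" using w_sums by (rule sums_summable)
lemma w_suminf: "suminf w = 1/2" using w_sums by (rule sums_unique[symmetric])

lemma tt_nonneg: "0 \<le> tt s e" and tt_le: "tt s e \<le> w e"
  using w_pos[of e] by (auto simp: tt_def)

lemma tt_summable: "summable (tt s)"
  by (rule summable_comparison_test[OF _ w_summable]) (auto intro!: exI[of _ 0] simp: tt_nonneg tt_le)

lemma tt_suminf_le: "suminf (tt s) \<le> 1/2"
  using suminf_le[OF tt_le tt_summable w_summable] w_suminf by simp

lemma tt_suminf_nonneg: "0 \<le> suminf (tt s)"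
  by (rule suminf_nonneg[OF tt_summable tt_nonneg])

lemma pre_children: "\<not> (pre (s @ [False]) t \<and> pre (s @ [True]) t)"
  unfolding pre_def by auto

lemma pre_child: "pre (s @ [b]) t \<Longrightarrow> pre s t"
  unfolding pre_def by auto

lemma tt_children: "tt (s @ [False]) e + tt (s @ [True]) e \<le> tt s e"
  using pre_children[of s "tau e"] pre_child[of s _ "tau e"] w_pos[of e]
  by (auto simp: tt_def)

lemma semimeasure_rho: "semimeasure rho"
  unfolding semimeasure_def
proof (intro conjI allI)
  fix s
  show "0 \<le> rho s" "rho s \<le> 1" using tt_suminf_nonneg[of s] tt_suminf_le[of s] by (auto simp: rho_def)
  have eq: "rho (s @ [False]) + rho (s @ [True]) = (\<Sum>e. tt (s @ [False]) e + tt (s @ [True]) e)"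
    by (simp add: rho_def suminf_add[OF tt_summable tt_summable])
  show "rho (s @ [False]) + rho (s @ [True]) \<le> rho s"
  proof (cases "s = []")
    case True
    have "(\<Sum>e. tt (s @ [False]) e + tt (s @ [True]) e) \<le> suminf w"
      by (rule suminf_le) (use tt_children tt_le order.trans in \<open>blast\<close>,
          intro summable_add tt_summable, rule w_summable)
    then show ?thesis using eq True w_suminf by (simp add: rho_def)
  next
    case False
    have "(\<Sum>e. tt (s @ [False]) e + tt (s @ [True]) e) \<le> suminf (tt s)"
      by (rule suminf_le) (use tt_children in \<open>blast\<close>, intro summable_add tt_summable, rule tt_summable)
    then show ?thesis using eq False by (simp add: rho_def)
  qed
qed (simp add: rho_def)



lemma str_code_zero: "str_code s = 0 \<longleftrightarrow> s = []"
  by (cases s) auto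

lemma pow_frac: "e \<le> k \<Longrightarrow> (2::real) ^ (k - e) / 2 ^ (k + 2) = w e"
proof -
  assume "e \<le> k"
  then have "(2::real) ^ k = 2 ^ (k - e) * 2 ^ e" by (simp add: power_add[symmetric])
  then show ?thesis by (simp add: w_def power_add field_simps power_one_over)
qed

lemma ts_le_tt: "ts s e k \<le> tt s e"
  by (auto simp: ts_def tt_def Dm_def w_pos less_imp_le)

lemma ts_nonneg: "0 \<le> ts s e k"
  by (auto simp: ts_def w_pos less_imp_le)

lemma ts_mono: "ts s e k \<le> ts s e (Suc k)"
  by (auto simp: ts_def w_pos less_imp_le)

lemma qq_formula: "qq s k = (real (A (str_code s) k) - real 0) / (real (Cc (str_code s) k) + 1)"
proof (cases "s = []")
  case True then show ?thesis by (simp add: qq_def A_def Cc_def)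
next
  case False
  then have nz: "str_code s \<noteq> 0" by (simp add: str_code_zero)
  have c: "real (Cc (str_code s) k) + 1 = 2 ^ (k + 2)"
  proof -
    have "(1::nat) \<le> 2 ^ (k + 2)" by simp
    then show ?thesis using nz by (simp add: Cc_def of_nat_diff)
  qed
  have trm: "ts s e k = real (if (\<exists>n<k. W e n) \<and> pc (str_code s) (ps (bleast (W e) k)) then 2 ^ (k - e) else 0) / 2 ^ (k + 2)"
    if e: "e < k" for e
  proof (cases "\<exists>n<k. W e n")
    case True
    then have "bleast (W e) k = (LEAST n. W e n)" by (rule bleast_eq)
    then have "pc (str_code s) (ps (bleast (W e) k)) \<longleftrightarrow> pre s (tau e)"
      using pc_iff[of s "tau e"] by (simp add: tau_def pre_def)
    then show ?thesis using True e pow_frac[of e k] by (simp add: ts_def)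
  next
    case False then show ?thesis by (auto simp: ts_def)
  qed
  have "qq s k = (\<Sum>e<k. real (if (\<exists>n<k. W e n) \<and> pc (str_code s) (ps (bleast (W e) k)) then 2 ^ (k - e) else 0) / 2 ^ (k + 2))"
    using False trm by (simp add: qq_def)
  also have "\<dots> = real (A (str_code s) k) / 2 ^ (k + 2)"
    using nz by (simp add: A_def sum_divide_distrib[symmetric])
  finally show ?thesis using c by simp
qed

lemma qq_mono: "qq s k \<le> qq s (Suc k)"
proof (cases "s = []")
  case False
  have "(\<Sum>e<k. ts s e k) \<le> (\<Sum>e<k. ts s e (Suc k))" by (rule sum_mono) (rule ts_mono)
  also have "\<dots> \<le> (\<Sum>e<Suc k. ts s e (Suc k))" using ts_nonneg by (simp add: sum_mono2)
  finally show ?thesis using False by (simp add: qq_def)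
qed (simp add: qq_def)

lemma qq_lim: "qq s \<longlonglongrightarrow> rho s"
proof (cases "s = []")
  case True
  then have "qq s = (\<lambda>k. 1)" by (auto simp: qq_def)
  then show ?thesis using True by (simp add: rho_def)
next
  case False
  show ?thesis
  proof (rule increasing_LIMSEQ)
    show "qq s k \<le> qq s (Suc k)" for k by (rule qq_mono)
    show "qq s k \<le> rho s" for k
    proof -
      have "(\<Sum>e<k. ts s e k) \<le> (\<Sum>e<k. tt s e)" by (rule sum_mono) (rule ts_le_tt)
      also have "\<dots> \<le> suminf (tt s)" by (rule sum_le_suminf[OF tt_summable]) (auto simp: tt_nonneg)
      finally show ?thesis using False by (simp add: qq_def rho_def)
    qed
    fix \<epsilon> :: real assume \<epsilon>: "0 < \<epsilon>"
    have "(\<lambda>n. \<Sum>i<n. tt s i) \<longlonglongrightarrow> suminf (tt s)" by (rule summable_LIMSEQ[OF tt_summable])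
    then obtain N where N: "\<And>n. n \<ge> N \<Longrightarrow> dist (\<Sum>i<n. tt s i) (suminf (tt s)) < \<epsilon>"
      using \<epsilon> by (metis LIMSEQ_iff_nz dist_norm)
    define K where "K = N + (\<Sum>e<N. (if Dm e then Suc (LEAST n. W e n) else 0))"
    have NK: "N \<le> K" by (simp add: K_def)
    have eqK: "ts s e K = tt s e" if e: "e < N" for e
    proof (cases "Dm e")
      case True
      then have "W e (LEAST n. W e n)" unfolding Dm_def by (rule LeastI_ex)
      moreover have "Suc (LEAST n. W e n) \<le> (\<Sum>e<N. (if Dm e then Suc (LEAST n. W e n) else 0))"
        using member_le_sum[of e "{..<N}" "\<lambda>e. if Dm e then Suc (LEAST n. W e n) else 0"] e True by simp
      then have "(LEAST n. W e n) < K" by (simp add: K_def)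
      ultimately show ?thesis using True by (auto simp: ts_def tt_def)
    next
      case False then show ?thesis by (auto simp: ts_def tt_def Dm_def)
    qed
    have "(\<Sum>i<N. tt s i) = (\<Sum>i<N. ts s i K)" using eqK by simp
    also have "\<dots> \<le> (\<Sum>i<K. ts s i K)" using NK ts_nonneg by (simp add: sum_mono2)
    finally have "(\<Sum>i<N. tt s i) \<le> qq s K" using False by (simp add: qq_def)
    moreover have "suminf (tt s) < (\<Sum>i<N. tt s i) + \<epsilon>" using N[of N] by (simp add: dist_real_def)
    ultimately show "\<exists>n. rho s \<le> qq s n + \<epsilon>" using False by (intro exI[of _ K]) (simp add: rho_def)
  qed
qed

lemma left_ce_rho: "left_ce rho"
proof -
  obtain ra where ra: "\<forall>x y. eval ra [x, y] (A x y)" using T_eval2[OF T_A] by blast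
  obtain rc' where rc': "\<forall>x y. eval rc' [x, y] (Cc x y)" using T_eval2[OF T_Cc] by blast
  have 1: "\<forall>\<sigma> s. \<exists>a b c. eval ra [str_code \<sigma>, s] a \<and> eval Zero [str_code \<sigma>, s] b \<and>
        eval rc' [str_code \<sigma>, s] c \<and> qq \<sigma> s = (real a - real b) / (real c + 1)"
    using ra rc' qq_formula by (blast intro: eval_zero)
  have 2: "\<forall>\<sigma> s. qq \<sigma> s \<le> qq \<sigma> (Suc s)" using qq_mono by blast
  have 3: "\<forall>\<sigma>. qq \<sigma> \<longlonglongrightarrow> rho \<sigma>" using qq_lim by blast
  show ?thesis unfolding left_ce_def using 1 2 3 by blast
qed



lemma length_prefix_of[simp]: "length (prefix_of X n) = n"
  by (simp add: prefix_of_def)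

lemma pre_length: "pre s t \<Longrightarrow> length s \<le> length t"
  unfolding pre_def by auto

lemma rho_nonneg: "0 \<le> rho s"
  using tt_suminf_nonneg[of s] by (simp add: rho_def)

lemma rho_small:
  assumes long: "\<And>e. e < N \<Longrightarrow> length (tau e) < length s" and ne: "s \<noteq> []"
  shows "rho s \<le> (1/2) ^ N"
proof -
  have z: "tt s e = 0" if "e < N" for e
    using long[OF that] pre_length[of s "tau e"] by (auto simp: tt_def)
  have "suminf (tt s) = (\<Sum>i. tt s (i + N)) + (\<Sum>i<N. tt s i)"
    by (rule suminf_split_initial_segment[OF tt_summable])
  also have "(\<Sum>i<N. tt s i) = 0" using z by simp
  also have "(\<Sum>i. tt s (i + N)) \<le> (\<Sum>i. (1/2) ^ N * w i)"
  proof (rule suminf_le)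
    show "tt s (i + N) \<le> (1/2) ^ N * w i" for i
      using tt_le[of s "i + N"] by (simp add: w_def power_add mult_ac)
    show "summable (\<lambda>i. tt s (i + N))" using tt_summable by (rule summable_ignore_initial_segment)
    show "summable (\<lambda>i. (1/2::real) ^ N * w i)" using w_summable by (rule summable_mult)
  qed
  also have "(\<Sum>i. (1/2::real) ^ N * w i) = (1/2) ^ N * (1/2)"
    using suminf_mult[OF w_summable, of "(1/2) ^ N"] w_suminf by simp
  finally show ?thesis using ne tt_suminf_nonneg[of s] by (simp add: rho_def)
qed

lemma non_atomic_rho: "non_atomic rho"
  unfolding non_atomic_def
proof
  fix X
  let ?f = "\<lambda>n. rho (prefix_of X n)"
  have bdd: "bdd_below (range ?f)" by (rule bdd_belowI[of _ 0]) (auto simp: rho_nonneg)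
  have ge: "0 \<le> (INF n. ?f n)" by (rule cINF_greatest) (auto simp: rho_nonneg)
  have le: "(INF n. ?f n) \<le> 0 + \<epsilon>" if \<epsilon>: "0 < \<epsilon>" for \<epsilon> :: real
  proof -
    obtain N where N: "(1/2::real) ^ N < \<epsilon>" using real_arch_pow_inv[OF \<epsilon>, of "1/2"] by auto
    define n where "n = Suc (\<Sum>e<N. length (tau e))"
    have "length (tau e) < n" if "e < N" for e
      using member_le_sum[of e "{..<N}" "\<lambda>e. length (tau e)"] that by (simp add: n_def)
    then have "?f n \<le> (1/2) ^ N" by (intro rho_small) (auto simp: n_def simp flip: length_0_conv)
    moreover have "(INF n. ?f n) \<le> ?f n" by (rule cINF_lower[OF bdd]) simp
    ultimately show ?thesis using N by simp
  qed
  have "(INF n. ?f n) \<le> 0" by (rule field_le_epsilon) (rule le)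
  then show "(INF n. ?f n) = 0" using ge by simp
qed

lemma rho_tau: "Dm e \<Longrightarrow> w e \<le> rho (tau e)"
proof (cases "tau e = []")
  case True
  have "(1/2::real) ^ (e + 2) \<le> 1" by (rule power_le_one) auto
  then show ?thesis using True by (simp add: rho_def w_def)
next
  case False
  assume D: "Dm e"
  have "tt (tau e) e = w e" using D by (simp add: tt_def pre_def)
  moreover have "sum (tt (tau e)) {e} \<le> suminf (tt (tau e))"
    by (rule sum_le_suminf[OF tt_summable]) (auto simp: tt_nonneg)
  ultimately show ?thesis using False by (simp add: rho_def)
qed

lemma rho_set_ge: "\<tau> \<in> E \<Longrightarrow> ennreal (rho \<tau>) \<le> rho_set rho E"
proof -
  assume t: "\<tau> \<in> E"
  have "infsum (\<lambda>\<sigma>. ennreal (rho \<sigma>)) {\<tau>} \<le> infsum (\<lambda>\<sigma>. ennreal (rho \<sigma>)) E"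
    by (rule infsum_mono_neutral) (use t in \<open>auto intro: nonneg_summable_on_complete\<close>)
  then show ?thesis by (simp add: rho_set_def)
qed

lemma all_MLR: "X \<in> MLR rho"
  unfolding MLR_def
proof (intro CollectI allI impI)
  fix U assume asm: "unif_ce U \<and> (\<forall>i. rho_set rho (U i) \<le> ennreal ((1/2) ^ i))"
  then obtain r where r: "\<And>i \<sigma>. \<sigma> \<in> U i \<longleftrightarrow> (\<exists>v. eval r [i, str_code \<sigma>] v)"
    unfolding unif_ce_def by blast
  let ?e = "rc r"
  show "X \<notin> (\<Inter>i. cyl (U i))"
  proof
    assume "X \<in> (\<Inter>i. cyl (U i))"
    then have "X \<in> cyl (U (?e + 3))" by blast
    then obtain \<sigma> where "\<sigma> \<in> U (?e + 3)" unfolding cyl_def by blast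
    then have "\<exists>v. eval r [?e + 3, str_code \<sigma>] v" using r by blast
    then obtain L where "W ?e (pair L (str_code \<sigma>))" using W_eval by blast
    then have D: "Dm ?e" by (auto simp: Dm_def)
    then have "W ?e (LEAST n. W ?e n)" unfolding Dm_def by (rule LeastI_ex)
    then have "\<exists>v. eval r [?e + 3, ps (LEAST n. W ?e n)] v" by (rule W_eval')
    then have "tau ?e \<in> U (?e + 3)" using r by (simp add: tau_def)
    then have "ennreal (rho (tau ?e)) \<le> ennreal ((1/2) ^ (?e + 3))"
      using rho_set_ge asm order.trans by blast
    moreover have "w ?e \<le> rho (tau ?e)" using rho_tau[OF D] .
    ultimately have "w ?e \<le> (1/2) ^ (?e + 3)"
      using ennreal_le_iff w_pos by (smt (verit) ennreal_leI zero_le_divide_1_iff zero_le_power)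
    moreover have "(1/2::real) ^ (?e + 3) < (1/2) ^ (?e + 2)" by (rule power_strict_decreasing) auto
    ultimately show False by (simp add: w_def)
  qed
qed

theorem theorem5p6:
  shows "\<exists>\<rho>. semimeasure \<rho> \<and> left_ce \<rho> \<and> non_atomic \<rho> \<and> (\<forall>X. X \<in> MLR \<rho>)"
  using semimeasure_rho left_ce_rho non_atomic_rho all_MLR by blast


end
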